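(* Let $\mathbf r:[L_1,L_2]\to\mathbb R^4$ be an arc-length parametrized curve with Frenet frame $\{\mathbf T,\mathbf N,\mathbf B_1,\mathbf B_2\}$ and curvatures $k_1,k_2,k_3$ (with $k_1>0$), and let $$\mathbf P(s,t,q)=\mathbf r(s)+u(s,t,q)\mathbf T(s)+v(s,t,q)\mathbf N(s)+w(s,t,q)\mathbf B_1(s)+x(s,t,q)\mathbf B_2(s),$$ $(s,t,q)\in[L_1,L_2]\times[T_1,T_2]\times[Q_1,Q_2]$, with $C^1$ marching-scale functions $u,v,w,x$. Fix $t_0\in[T_1,T_2]$, $q_0\in[Q_1,Q_2]$. Then $\mathbf r$ is an isogeodesic of $\mathbf P$ at $(t_0,q_0)$ (i.e. $\mathbf P(s,t_0,q_0)=\mathbf r(s)$ for all $s$, $\mathbf P$ is regular along $\mathbf r$, and $\mathbf r$ is a geodesic of $\mathbf P$) if and only if for all $s\in[L_1,L_2]$: (i) $u(s,t_0,q_0)=v(s,t_0,q_0)=w(s,t_0,q_0)=x(s,t_0,q_0)=0$; (ii) $\frac{\partial v}{\partial t}\frac{\partial x}{\partial q}-\frac{\partial v}{\partial q}\frac{\partial x}{\partial t}=0$ and $\frac{\partial v}{\partial t}\frac{\partial w}{\partial q}-\frac{\partial v}{\partial q}\frac{\partial w}{\partial t}=0$ at $(s,t_0,q_0)$; (iii) $\frac{\partial w}{\partial t}\frac{\partial x}{\partial q}-\frac{\partial w}{\partial q}\frac{\partial x}{\partial t}\neq 0$ at $(s,t_0,q_0)$. Moreover, given (i) and (iii), condition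 (ii) is equivalent to $\frac{\partial v}{\partial t}(s,t_0,q_0)=\frac{\partial v}{\partial q}(s,t_0,q_0)=0$.
   Context: The Frenet frame of an arc-length curve $\mathbf r$ in $\mathbb R^4$ (assumed smooth enough with $k_1,k_2$ nonvanishing so that the frame is defined) satisfies $\mathbf T=\mathbf r'$, $\mathbf T'=k_1\mathbf N$, $\mathbf N'=-k_1\mathbf T+k_2\mathbf B_1$, $\mathbf B_1'=-k_2\mathbf N+k_3\mathbf B_2$, $\mathbf B_2'=-k_3\mathbf B_1$, and is orthonormal. A hypersurface $\mathbf P(s,t,q)$ is regular at a point if $\partial_s\mathbf P,\partial_t\mathbf P,\partial_q\mathbf P$ are linearly independent there; its normal is the four-dimensional vector product $\partial_s\mathbf P\otimes\partial_t\mathbf P\otimes\partial_q\mathbf P$ (formal determinant with first row $\mathbf e_1,\dots,\mathbf e_4$ and the three vectors' coordinates as remaining rows). A curve $\mathbf r$ lying on $\mathbf P$ with $k_1>0$ is a geodesic of $\mathbf P$ iff its principal normal $\mathbf N$ is parallel to the normal of $\mathbf P$ along the curve. A curve is an isoparametric curve of $\mathbf P$ if $\mathbf r(s)=\mathbf P(s,t_0,q_0)$ for some fixed $t_0,q_0$; an isogeodesic is a curve that is both a geodesic and an isoparametric curve. *)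

theory Defs
  imports "HOL-Analysis.Analysis"
begin

definition pd_s :: "(real \<Rightarrow> real \<Rightarrow> real \<Rightarrow> 'a::real_normed_vector) \<Rightarrow> real set \<Rightarrow> real \<Rightarrow> real \<Rightarrow> real \<Rightarrow> 'a" where
  "pd_s f I s t q = vector_derivative (\<lambda>s'. f s' t q) (at s within I)"

definition pd_t :: "(real \<Rightarrow> real \<Rightarrow> real \<Rightarrow> 'a::real_normed_vector) \<Rightarrow> real set \<Rightarrow> real \<Rightarrow> real \<Rightarrow> real \<Rightarrow> 'a" where
  "pd_t f J s t q = vector_derivative (\<lambda>t'. f s t' q) (at t within J)"

definition pd_q :: "(real \<Rightarrow> real \<Rightarrow> real \<Rightarrow> 'a::real_normed_vector) \<Rightarrow> real set \<Rightarrow> real \<Rightarrow> real \<Rightarrow> real \<Rightarrow> 'a" where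
  "pd_q f K s t q = vector_derivative (\<lambda>q'. f s t q') (at q within K)"

definition C1_box :: "(real \<Rightarrow> real \<Rightarrow> real \<Rightarrow> real) \<Rightarrow> real set \<Rightarrow> real set \<Rightarrow> real set \<Rightarrow> bool" where
  "C1_box f I J K \<longleftrightarrow>
     (\<forall>s\<in>I. \<forall>t\<in>J. \<forall>q\<in>K.
        (\<lambda>s'. f s' t q) differentiable (at s within I) \<and>
        (\<lambda>t'. f s t' q) differentiable (at t within J) \<and>
        (\<lambda>q'. f s t q') differentiable (at q within K)) \<and>
     continuous_on (I \<times> J \<times> K) (\<lambda>(s,t,q). f s t q) \<and>
     continuous_on (I \<times> J \<times> K) (\<lambda>(s,t,q). pd_s f I s t q) \<and>
     continuous_on (I \<times> J \<times> K) (\<lambda>(s,t,q). pd_t f J s t q) \<and>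
     continuous_on (I \<times> J \<times> K) (\<lambda>(s,t,q). pd_q f K s t q)"

text \<open>The four-dimensional vector product: formal determinant with first row e1..e4
  and the coordinates of a, b, c as the remaining rows (cofactor expansion along row 1).\<close>

definition det3 :: "real \<Rightarrow> real \<Rightarrow> real \<Rightarrow> real \<Rightarrow> real \<Rightarrow> real \<Rightarrow> real \<Rightarrow> real \<Rightarrow> real \<Rightarrow> real" where
  "det3 a1 a2 a3 b1 b2 b3 c1 c2 c3 =
     a1 * (b2 * c3 - b3 * c2) - a2 * (b1 * c3 - b3 * c1) + a3 * (b1 * c2 - b2 * c1)"

definition cross4 :: "real^4 \<Rightarrow> real^4 \<Rightarrow> real^4 \<Rightarrow> real^4" where
  "cross4 a b c = vector
     [  det3 (a$2) (a$3) (a$4) (b$2) (b$3) (b$4) (c$2) (c$3) (c$4),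
      - det3 (a$1) (a$3) (a$4) (b$1) (b$3) (b$4) (c$1) (c$3) (c$4),
        det3 (a$1) (a$2) (a$4) (b$1) (b$2) (b$4) (c$1) (c$2) (c$4),
      - det3 (a$1) (a$2) (a$3) (b$1) (b$2) (b$3) (c$1) (c$2) (c$3)]"

definition lin_indep3 :: "'a::real_vector \<Rightarrow> 'a \<Rightarrow> 'a \<Rightarrow> bool" where
  "lin_indep3 a b c \<longleftrightarrow>
     (\<forall>\<alpha> \<beta> \<gamma>. \<alpha> *\<^sub>R a + \<beta> *\<^sub>R b + \<gamma> *\<^sub>R c = 0 \<longrightarrow> \<alpha> = 0 \<and> \<beta> = 0 \<and> \<gamma> = 0)"

definition parallel :: "'a::real_vector \<Rightarrow> 'a \<Rightarrow> bool" where
  "parallel a b \<longleftrightarrow> (\<exists>c. a = c *\<^sub>R b) \<or> (\<exists>c. b = c *\<^sub>R a)"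

definition regular_at ::
  "(real \<Rightarrow> real \<Rightarrow> real \<Rightarrow> real^4) \<Rightarrow> real set \<Rightarrow> real set \<Rightarrow> real set \<Rightarrow> real \<Rightarrow> real \<Rightarrow> real \<Rightarrow> bool" where
  "regular_at P I J K s t q \<longleftrightarrow> lin_indep3 (pd_s P I s t q) (pd_t P J s t q) (pd_q P K s t q)"

definition surf_normal ::
  "(real \<Rightarrow> real \<Rightarrow> real \<Rightarrow> real^4) \<Rightarrow> real set \<Rightarrow> real set \<Rightarrow> real set \<Rightarrow> real \<Rightarrow> real \<Rightarrow> real \<Rightarrow> real^4" where
  "surf_normal P I J K s t q = cross4 (pd_s P I s t q) (pd_t P J s t q) (pd_q P K s t q)"

definition isoparametric ::
  "(real \<Rightarrow> real^4) \<Rightarrow> (real \<Rightarrow> real \<Rightarrow> real \<Rightarrow> real^4) \<Rightarrow> real set \<Rightarrow> real \<Rightarrow> real \<Rightarrow> bool" where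
  "isoparametric r P I t0 q0 \<longleftrightarrow> (\<forall>s\<in>I. P s t0 q0 = r s)"

text \<open>r (with principal normal N) is an isogeodesic of P at (t0,q0): isoparametric,
  P regular along r, and N parallel to the normal of P along r (geodesic).\<close>

definition isogeodesic ::
  "(real \<Rightarrow> real^4) \<Rightarrow> (real \<Rightarrow> real^4) \<Rightarrow> (real \<Rightarrow> real \<Rightarrow> real \<Rightarrow> real^4) \<Rightarrow>
   real set \<Rightarrow> real set \<Rightarrow> real set \<Rightarrow> real \<Rightarrow> real \<Rightarrow> bool" where
  "isogeodesic r N P I J K t0 q0 \<longleftrightarrow>
     isoparametric r P I t0 q0 \<and>
     (\<forall>s\<in>I. regular_at P I J K s t0 q0) \<and>
     (\<forall>s\<in>I. parallel (N s) (surf_normal P I J K s t0 q0))"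

end

theory Submission
  imports Defs
begin

lemma vector_4 [simp]:
 "(vector [a,b,c,d] ::('a::zero)^4)$1 = a"
 "(vector [a,b,c,d] ::('a::zero)^4)$2 = b"
 "(vector [a,b,c,d] ::('a::zero)^4)$3 = c"
 "(vector [a,b,c,d] ::('a::zero)^4)$4 = d"
  unfolding vector_def by simp_all

lemma cross4_expand:
  "cross4 a (p0 *\<^sub>R a + p1 *\<^sub>R e1 + p2 *\<^sub>R e2 + p3 *\<^sub>R e3) (q0 *\<^sub>R a + q1 *\<^sub>R e1 + q2 *\<^sub>R e2 + q3 *\<^sub>R e3)
   = (p1*q2 - p2*q1) *\<^sub>R cross4 a e1 e2 + (p1*q3 - p3*q1) *\<^sub>R cross4 a e1 e3 + (p2*q3 - p3*q2) *\<^sub>R cross4 a e2 e3"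
  unfolding vec_eq_iff forall_4 cross4_def det3_def
  by (simp add: algebra_simps)

lemma cross4_orth:
  "cross4 a b c \<bullet> a = 0" "cross4 a b c \<bullet> b = 0" "cross4 a b c \<bullet> c = 0"
  unfolding inner_vec_def sum_4 cross4_def det3_def by (simp_all add: algebra_simps)

lemma cross4_gram:
  "cross4 a b c \<bullet> cross4 a b c =
    (a\<bullet>a)*((b\<bullet>b)*(c\<bullet>c) - (b\<bullet>c)*(b\<bullet>c)) - (a\<bullet>b)*((a\<bullet>b)*(c\<bullet>c) - (b\<bullet>c)*(a\<bullet>c))
    + (a\<bullet>c)*((a\<bullet>b)*(b\<bullet>c) - (b\<bullet>b)*(a\<bullet>c))"
  unfolding inner_vec_def sum_4 cross4_def det3_def by (simp add: algebra_simps power2_eq_square)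

definition orthon4 :: "real^4 \<Rightarrow> real^4 \<Rightarrow> real^4 \<Rightarrow> real^4 \<Rightarrow> bool" where
 "orthon4 T N B1 B2 \<longleftrightarrow> T \<bullet> T = 1 \<and> N \<bullet> N = 1 \<and> B1 \<bullet> B1 = 1 \<and> B2 \<bullet> B2 = 1 \<and>
         T \<bullet> N = 0 \<and> T \<bullet> B1 = 0 \<and> T \<bullet> B2 = 0 \<and>
         N \<bullet> B1 = 0 \<and> N \<bullet> B2 = 0 \<and> B1 \<bullet> B2 = 0"

lemma frame_zero:
  assumes o: "orthon4 T N B1 B2" and z: "z \<bullet> T = 0" "z \<bullet> N = 0" "z \<bullet> B1 = 0" "z \<bullet> B2 = 0"
  shows "z = 0"
proof -
  let ?S = "{T, N, B1, B2}"
  have ne: "T \<noteq> N" "T \<noteq> B1" "T \<noteq> B2" "N \<noteq> B1" "N \<noteq> B2" "B1 \<noteq> B2"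
    using o unfolding orthon4_def by auto
  have n0: "0 \<notin> ?S" using o unfolding orthon4_def by auto
  have po: "pairwise orthogonal ?S"
    using o unfolding orthon4_def pairwise_def orthogonal_def by (auto simp: inner_commute)
  have ind: "independent ?S" by (rule pairwise_orthogonal_independent[OF po n0])
  have c: "card ?S = 4" using ne by auto
  have "UNIV \<subseteq> span ?S"
    by (rule card_ge_dim_independent[OF _ ind]) (auto simp: c)
  hence "z \<in> span ?S" by auto
  hence "orthogonal z z"
    by (rule orthogonal_to_span) (use z in \<open>auto simp: orthogonal_def\<close>)
  thus ?thesis by (simp add: orthogonal_def)
qed

lemma orthon4_inner:
  assumes "orthon4 T N B1 B2"
  shows "T \<bullet> T = 1" "N \<bullet> N = 1" "B1 \<bullet> B1 = 1" "B2 \<bullet> B2 = 1"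
   "T \<bullet> N = 0" "T \<bullet> B1 = 0" "T \<bullet> B2 = 0" "N \<bullet> B1 = 0" "N \<bullet> B2 = 0" "B1 \<bullet> B2 = 0"
   "N \<bullet> T = 0" "B1 \<bullet> T = 0" "B2 \<bullet> T = 0" "B1 \<bullet> N = 0" "B2 \<bullet> N = 0" "B2 \<bullet> B1 = 0"
  using assms unfolding orthon4_def by (simp_all add: inner_commute)

lemma unit_perp:
  assumes o: "orthon4 T N B1 B2" and X: "X \<bullet> T = 0" "X \<bullet> N = 0" "X \<bullet> B1 = 0" "X \<bullet> X = 1"
  shows "X = (X \<bullet> B2) *\<^sub>R B2 \<and> (X \<bullet> B2) * (X \<bullet> B2) = 1"
proof -
  let ?Y = "X - (X \<bullet> B2) *\<^sub>R B2"
  have "?Y = 0"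
    by (rule frame_zero[OF o]) (use orthon4_inner[OF o] X in \<open>simp_all add: inner_diff_left\<close>)
  hence e: "X = (X \<bullet> B2) *\<^sub>R B2" by simp
  have "X \<bullet> X = (X \<bullet> B2) * (X \<bullet> B2) * (B2 \<bullet> B2)"
    by (subst (1 2) e) (simp add: inner_commute)
  thus ?thesis using e o X by (simp add: orthon4_def)
qed

lemma orthon4_perm:
  "orthon4 T N B1 B2 \<Longrightarrow> orthon4 T N B2 B1"
  "orthon4 T N B1 B2 \<Longrightarrow> orthon4 T B1 B2 N"
  unfolding orthon4_def by (auto simp: inner_commute)

lemma aux1: "(\<beta>::real)*a = -\<gamma>*c \<Longrightarrow> \<beta>*b = -\<gamma>*d \<Longrightarrow> \<beta>*(a*d - b*c) = 0"
proof -
  assume h: "\<beta>*a = -\<gamma>*c" "\<beta>*b = -\<gamma>*d"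
  have "\<beta>*(a*d - b*c) = (\<beta>*a)*d - (\<beta>*b)*c" by (simp add: algebra_simps)
  also have "\<dots> = 0" unfolding h by simp
  finally show ?thesis .
qed

lemma aux2: "(\<gamma>::real)*c = -\<beta>*a \<Longrightarrow> \<gamma>*d = -\<beta>*b \<Longrightarrow> \<gamma>*(a*d - b*c) = 0"
proof -
  assume h: "\<gamma>*c = -\<beta>*a" "\<gamma>*d = -\<beta>*b"
  have "\<gamma>*(a*d - b*c) = a*(\<gamma>*d) - b*(\<gamma>*c)" by (simp add: algebra_simps)
  also have "\<dots> = 0" unfolding h by simp
  finally show ?thesis .
qed

lemma lin_alg:
  fixes a1 a2 a3 a4 b1 b2 b3 b4 :: real
  shows "(\<forall>\<alpha> \<beta> \<gamma>. \<alpha>+\<beta>*a1+\<gamma>*b1 = 0 \<and> \<beta>*a2+\<gamma>*b2 = 0 \<and> \<beta>*a3+\<gamma>*b3 = 0 \<and> \<beta>*a4+\<gamma>*b4 = 0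
          \<longrightarrow> \<alpha> = 0 \<and> \<beta> = 0 \<and> \<gamma> = 0)
   \<longleftrightarrow> \<not> (a2*b3 - a3*b2 = 0 \<and> a2*b4 - a4*b2 = 0 \<and> a3*b4 - a4*b3 = 0)"
proof
  assume H: "\<forall>\<alpha> \<beta> \<gamma>. \<alpha>+\<beta>*a1+\<gamma>*b1 = 0 \<and> \<beta>*a2+\<gamma>*b2 = 0 \<and> \<beta>*a3+\<gamma>*b3 = 0 \<and> \<beta>*a4+\<gamma>*b4 = 0
          \<longrightarrow> \<alpha> = 0 \<and> \<beta> = 0 \<and> \<gamma> = 0"
  show "\<not> (a2*b3 - a3*b2 = 0 \<and> a2*b4 - a4*b2 = 0 \<and> a3*b4 - a4*b3 = 0)"
  proof
    assume m: "a2*b3 - a3*b2 = 0 \<and> a2*b4 - a4*b2 = 0 \<and> a3*b4 - a4*b3 = 0"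
    show False
    proof (cases "a2 = 0 \<and> a3 = 0 \<and> a4 = 0")
      case True
      thus False using H[rule_format, of "-a1" 1 0] by simp
    next
      case False
      then consider "a2 \<noteq> 0" | "a3 \<noteq> 0" | "a4 \<noteq> 0" by blast
      thus False
      proof cases
        case 1 thus False using H[rule_format, of "-(b2*a1 - a2*b1)" b2 "-a2"] m by (auto simp: algebra_simps)
      next
        case 2 thus False using H[rule_format, of "-(b3*a1 - a3*b1)" b3 "-a3"] m by (auto simp: algebra_simps)
      next
        case 3 thus False using H[rule_format, of "-(b4*a1 - a4*b1)" b4 "-a4"] m by (auto simp: algebra_simps)
      qed
    qed
  qed
next
  assume m: "\<not> (a2*b3 - a3*b2 = 0 \<and> a2*b4 - a4*b2 = 0 \<and> a3*b4 - a4*b3 = 0)"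
  show "\<forall>\<alpha> \<beta> \<gamma>. \<alpha>+\<beta>*a1+\<gamma>*b1 = 0 \<and> \<beta>*a2+\<gamma>*b2 = 0 \<and> \<beta>*a3+\<gamma>*b3 = 0 \<and> \<beta>*a4+\<gamma>*b4 = 0
          \<longrightarrow> \<alpha> = 0 \<and> \<beta> = 0 \<and> \<gamma> = 0"
  proof (intro allI impI)
    fix \<alpha> \<beta> \<gamma> :: real
    assume e: "\<alpha>+\<beta>*a1+\<gamma>*b1 = 0 \<and> \<beta>*a2+\<gamma>*b2 = 0 \<and> \<beta>*a3+\<gamma>*b3 = 0 \<and> \<beta>*a4+\<gamma>*b4 = 0"
    have "\<beta> * (a2*b3 - a3*b2) = 0" "\<gamma> * (a2*b3 - a3*b2) = 0"
         "\<beta> * (a2*b4 - a4*b2) = 0" "\<gamma> * (a2*b4 - a4*b2) = 0"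
         "\<beta> * (a3*b4 - a4*b3) = 0" "\<gamma> * (a3*b4 - a4*b3) = 0"
      using e aux1[of \<beta> a2 \<gamma> b2 a3 b3] aux2[of \<gamma> b2 \<beta> a2 b3 a3]
        aux1[of \<beta> a2 \<gamma> b2 a4 b4] aux2[of \<gamma> b2 \<beta> a2 b4 a4]
        aux1[of \<beta> a3 \<gamma> b3 a4 b4] aux2[of \<gamma> b3 \<beta> a3 b4 a4] by (simp_all add: eq_neg_iff_add_eq_0 add.commute)
    hence "\<beta> = 0" "\<gamma> = 0" using m by auto
    thus "\<alpha> = 0 \<and> \<beta> = 0 \<and> \<gamma> = 0" using e by simp
  qed
qed

lemma combo_zero:
  assumes o: "orthon4 T N B1 B2"
  shows "c1 *\<^sub>R T + c2 *\<^sub>R N + c3 *\<^sub>R B1 + c4 *\<^sub>R B2 = 0 \<longleftrightarrow> c1 = 0 \<and> c2 = 0 \<and> c3 = 0 \<and> c4 = 0"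
proof
  assume h: "c1 *\<^sub>R T + c2 *\<^sub>R N + c3 *\<^sub>R B1 + c4 *\<^sub>R B2 = 0"
  have "(c1 *\<^sub>R T + c2 *\<^sub>R N + c3 *\<^sub>R B1 + c4 *\<^sub>R B2) \<bullet> T = 0"
       "(c1 *\<^sub>R T + c2 *\<^sub>R N + c3 *\<^sub>R B1 + c4 *\<^sub>R B2) \<bullet> N = 0"
       "(c1 *\<^sub>R T + c2 *\<^sub>R N + c3 *\<^sub>R B1 + c4 *\<^sub>R B2) \<bullet> B1 = 0"
       "(c1 *\<^sub>R T + c2 *\<^sub>R N + c3 *\<^sub>R B1 + c4 *\<^sub>R B2) \<bullet> B2 = 0" using h by simp_all
  thus "c1 = 0 \<and> c2 = 0 \<and> c3 = 0 \<and> c4 = 0"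
    using orthon4_inner[OF o] by (simp add: inner_add_left)
qed simp

lemma core:
  assumes o: "orthon4 T N B1 B2"
    and Pt: "Pt = a1 *\<^sub>R T + a2 *\<^sub>R N + a3 *\<^sub>R B1 + a4 *\<^sub>R B2"
    and Pq: "Pq = b1 *\<^sub>R T + b2 *\<^sub>R N + b3 *\<^sub>R B1 + b4 *\<^sub>R B2"
  shows "(lin_indep3 T Pt Pq \<and> parallel N (cross4 T Pt Pq)) \<longleftrightarrow>
         (a2*b4 - b2*a4 = 0 \<and> a2*b3 - b2*a3 = 0 \<and> a3*b4 - b3*a4 \<noteq> 0)"
proof -
  note oi = orthon4_inner[OF o]
  define X12 where "X12 = cross4 T N B1"
  define X13 where "X13 = cross4 T N B2"
  define X23 where "X23 = cross4 T B1 B2"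
  define m12 where "m12 = a2*b3 - a3*b2"
  define m13 where "m13 = a2*b4 - a4*b2"
  define m23 where "m23 = a3*b4 - a4*b3"
  have u12: "X12 = (X12 \<bullet> B2) *\<^sub>R B2 \<and> (X12 \<bullet> B2) * (X12 \<bullet> B2) = 1"
    by (rule unit_perp[OF o]) (simp_all add: X12_def cross4_orth cross4_gram oi)
  have u13: "X13 = (X13 \<bullet> B1) *\<^sub>R B1 \<and> (X13 \<bullet> B1) * (X13 \<bullet> B1) = 1"
    by (rule unit_perp[OF orthon4_perm(1)[OF o]]) (simp_all add: X13_def cross4_orth cross4_gram oi)
  have u23: "X23 = (X23 \<bullet> N) *\<^sub>R N \<and> (X23 \<bullet> N) * (X23 \<bullet> N) = 1"
    by (rule unit_perp[OF orthon4_perm(2)[OF o]]) (simp_all add: X23_def cross4_orth cross4_gram oi)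
  obtain s12 s13 s23 where s: "X12 = s12 *\<^sub>R B2" "s12 \<noteq> 0" "X13 = s13 *\<^sub>R B1" "s13 \<noteq> 0"
     "X23 = s23 *\<^sub>R N" "s23 \<noteq> 0"
    using u12 u13 u23 by (metis mult_zero_left zero_neq_one)
  have n: "cross4 T Pt Pq = (m23 * s23) *\<^sub>R N + (m13 * s13) *\<^sub>R B1 + (m12 * s12) *\<^sub>R B2"
    unfolding Pt Pq using cross4_expand[of T a1 a2 N a3 B1 a4 B2 b1 b2 b3 b4] s
    by (simp add: X12_def X13_def X23_def m12_def m13_def m23_def algebra_simps)
  have li: "lin_indep3 T Pt Pq \<longleftrightarrow> \<not> (m12 = 0 \<and> m13 = 0 \<and> m23 = 0)"
  proof -
    have "\<And>\<alpha> \<beta> \<gamma>. \<alpha> *\<^sub>R T + \<beta> *\<^sub>R Pt + \<gamma> *\<^sub>R Pq =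
       (\<alpha>+\<beta>*a1+\<gamma>*b1) *\<^sub>R T + (\<beta>*a2+\<gamma>*b2) *\<^sub>R N + (\<beta>*a3+\<gamma>*b3) *\<^sub>R B1 + (\<beta>*a4+\<gamma>*b4) *\<^sub>R B2"
      unfolding Pt Pq by (simp add: algebra_simps)
    hence "lin_indep3 T Pt Pq \<longleftrightarrow> (\<forall>\<alpha> \<beta> \<gamma>. \<alpha>+\<beta>*a1+\<gamma>*b1 = 0 \<and> \<beta>*a2+\<gamma>*b2 = 0 \<and> \<beta>*a3+\<gamma>*b3 = 0 \<and> \<beta>*a4+\<gamma>*b4 = 0
          \<longrightarrow> \<alpha> = 0 \<and> \<beta> = 0 \<and> \<gamma> = 0)"
      unfolding lin_indep3_def using combo_zero[OF o] by simp
    thus ?thesis using lin_alg unfolding m12_def m13_def m23_def by simp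
  qed
  have pa: "parallel N (cross4 T Pt Pq) \<longleftrightarrow> m12 = 0 \<and> m13 = 0"
  proof
    assume "parallel N (cross4 T Pt Pq)"
    then consider c where "N = c *\<^sub>R cross4 T Pt Pq" | c where "cross4 T Pt Pq = c *\<^sub>R N"
      unfolding parallel_def by blast
    thus "m12 = 0 \<and> m13 = 0"
    proof cases
      case 1
      have e: "N \<bullet> v = (c *\<^sub>R cross4 T Pt Pq) \<bullet> v" for v
        using arg_cong[OF 1, where f="\<lambda>y. y \<bullet> v"] by simp
      have "N \<bullet> N = c * (m23 * s23)" "N \<bullet> B1 = c * (m13 * s13)" "N \<bullet> B2 = c * (m12 * s12)"
        unfolding e[of N] e[of B1] e[of B2] n by (simp_all add: inner_add_left oi)
      hence "c \<noteq> 0" "c * (m13 * s13) = 0" "c * (m12 * s12) = 0" using oi by auto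
      thus ?thesis using s by simp
    next
      case 2
      hence "cross4 T Pt Pq \<bullet> B1 = 0" "cross4 T Pt Pq \<bullet> B2 = 0" by (simp_all add: oi)
      thus ?thesis unfolding n using s by (simp add: inner_add_left oi)
    qed
  next
    assume "m12 = 0 \<and> m13 = 0"
    thus "parallel N (cross4 T Pt Pq)" unfolding n parallel_def by auto
  qed
  show ?thesis unfolding li pa m12_def m13_def m23_def by (auto simp: mult.commute)
qed


lemma minor_lemma:
  fixes a2 a3 a4 b2 b3 b4 :: real
  assumes D: "a3*b4 - b3*a4 \<noteq> 0"
  shows "(a2*b4 - b2*a4 = 0 \<and> a2*b3 - b2*a3 = 0) \<longleftrightarrow> (a2 = 0 \<and> b2 = 0)"
proof
  assume h: "a2*b4 - b2*a4 = 0 \<and> a2*b3 - b2*a3 = 0"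
  hence h1: "a2*b4 = b2*a4" and h2: "a2*b3 = b2*a3" by auto
  have "a2 * (a3*b4 - b3*a4) = a3*(a2*b4) - a4*(a2*b3)" by (simp add: algebra_simps)
  also have "\<dots> = a3*(b2*a4) - a4*(b2*a3)" by (simp only: h1 h2)
  also have "\<dots> = 0" by (simp add: algebra_simps)
  finally have "a2 = 0" using D by simp
  have "b2 * (a3*b4 - b3*a4) = b4*(b2*a3) - b3*(b2*a4)" by (simp add: algebra_simps)
  also have "\<dots> = b4*(a2*b3) - b3*(a2*b4)" by (simp only: h1 h2)
  also have "\<dots> = 0" by (simp add: algebra_simps)
  finally have "b2 = 0" using D by simp
  show "a2 = 0 \<and> b2 = 0" using \<open>a2 = 0\<close> \<open>b2 = 0\<close> by simp
qed simp

lemma lin_deriv: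
  fixes f1 f2 f3 f4 :: "real \<Rightarrow> real" and c e1 e2 e3 e4 :: "real^4"
  assumes ab: "a < b" "t \<in> {a..b}"
    and d: "f1 differentiable (at t within {a..b})" "f2 differentiable (at t within {a..b})"
           "f3 differentiable (at t within {a..b})" "f4 differentiable (at t within {a..b})"
  shows "vector_derivative (\<lambda>t. c + f1 t *\<^sub>R e1 + f2 t *\<^sub>R e2 + f3 t *\<^sub>R e3 + f4 t *\<^sub>R e4) (at t within {a..b})
    = vector_derivative f1 (at t within {a..b}) *\<^sub>R e1 + vector_derivative f2 (at t within {a..b}) *\<^sub>R e2
      + vector_derivative f3 (at t within {a..b}) *\<^sub>R e3 + vector_derivative f4 (at t within {a..b}) *\<^sub>R e4"
proof -
  let ?F = "at t within {a..b}"
  have sc: "((\<lambda>t. f t *\<^sub>R e) has_vector_derivative (vector_derivative f ?F *\<^sub>R e)) ?F"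
    if "f differentiable ?F" for f :: "real \<Rightarrow> real" and e :: "real^4"
  proof -
    have "(f has_vector_derivative vector_derivative f ?F) ?F"
      using that by (rule vector_derivative_works[THEN iffD1])
    hence "(f has_field_derivative vector_derivative f ?F) ?F"
      by (simp add: has_real_derivative_iff_has_vector_derivative)
    from has_vector_derivative_scaleR[OF this has_vector_derivative_const[of e]]
    show ?thesis by simp
  qed
  have "((\<lambda>t. c + f1 t *\<^sub>R e1 + f2 t *\<^sub>R e2 + f3 t *\<^sub>R e3 + f4 t *\<^sub>R e4) has_vector_derivative
     (0 + vector_derivative f1 ?F *\<^sub>R e1 + vector_derivative f2 ?F *\<^sub>R e2
      + vector_derivative f3 ?F *\<^sub>R e3 + vector_derivative f4 ?F *\<^sub>R e4)) ?F"
    by (intro has_vector_derivative_add has_vector_derivative_const sc d)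
  hence "((\<lambda>t. c + f1 t *\<^sub>R e1 + f2 t *\<^sub>R e2 + f3 t *\<^sub>R e3 + f4 t *\<^sub>R e4) has_vector_derivative
     (vector_derivative f1 ?F *\<^sub>R e1 + vector_derivative f2 ?F *\<^sub>R e2
      + vector_derivative f3 ?F *\<^sub>R e3 + vector_derivative f4 ?F *\<^sub>R e4)) ?F" by simp
  thus ?thesis by (rule vector_derivative_within_closed_interval[OF ab])
qed

theorem mainTheorem1:
  fixes r T N B1 B2 :: "real \<Rightarrow> real^4"
    and k1 k2 k3 :: "real \<Rightarrow> real"
    and u v w x :: "real \<Rightarrow> real \<Rightarrow> real \<Rightarrow> real"
    and P :: "real \<Rightarrow> real \<Rightarrow> real \<Rightarrow> real^4"
    and L1 L2 T1 T2 Q1 Q2 t0 q0 :: real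
  assumes intervals: "L1 < L2" "T1 < T2" "Q1 < Q2"
    and frenet_T: "\<forall>s\<in>{L1..L2}. (r has_vector_derivative T s) (at s within {L1..L2})"
    and frenet_N: "\<forall>s\<in>{L1..L2}. (T has_vector_derivative (k1 s *\<^sub>R N s)) (at s within {L1..L2})"
    and frenet_B1: "\<forall>s\<in>{L1..L2}. (N has_vector_derivative (- k1 s *\<^sub>R T s + k2 s *\<^sub>R B1 s)) (at s within {L1..L2})"
    and frenet_B2: "\<forall>s\<in>{L1..L2}. (B1 has_vector_derivative (- k2 s *\<^sub>R N s + k3 s *\<^sub>R B2 s)) (at s within {L1..L2})"
    and frenet_end: "\<forall>s\<in>{L1..L2}. (B2 has_vector_derivative (- k3 s *\<^sub>R B1 s)) (at s within {L1..L2})"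
    and orthonormal: "\<forall>s\<in>{L1..L2}.
         T s \<bullet> T s = 1 \<and> N s \<bullet> N s = 1 \<and> B1 s \<bullet> B1 s = 1 \<and> B2 s \<bullet> B2 s = 1 \<and>
         T s \<bullet> N s = 0 \<and> T s \<bullet> B1 s = 0 \<and> T s \<bullet> B2 s = 0 \<and>
         N s \<bullet> B1 s = 0 \<and> N s \<bullet> B2 s = 0 \<and> B1 s \<bullet> B2 s = 0"
    and k1_pos: "\<forall>s\<in>{L1..L2}. k1 s > 0"
    and k2_nz: "\<forall>s\<in>{L1..L2}. k2 s \<noteq> 0"
    and C1: "C1_box u {L1..L2} {T1..T2} {Q1..Q2}" "C1_box v {L1..L2} {T1..T2} {Q1..Q2}"
            "C1_box w {L1..L2} {T1..T2} {Q1..Q2}" "C1_box x {L1..L2} {T1..T2} {Q1..Q2}"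
    and P_def: "\<And>s t q. P s t q = r s + u s t q *\<^sub>R T s + v s t q *\<^sub>R N s + w s t q *\<^sub>R B1 s + x s t q *\<^sub>R B2 s"
    and t0: "t0 \<in> {T1..T2}" and q0: "q0 \<in> {Q1..Q2}"
  shows "(isogeodesic r N P {L1..L2} {T1..T2} {Q1..Q2} t0 q0 \<longleftrightarrow>
      (\<forall>s\<in>{L1..L2}.
         (u s t0 q0 = 0 \<and> v s t0 q0 = 0 \<and> w s t0 q0 = 0 \<and> x s t0 q0 = 0) \<and>
         (pd_t v {T1..T2} s t0 q0 * pd_q x {Q1..Q2} s t0 q0 - pd_q v {Q1..Q2} s t0 q0 * pd_t x {T1..T2} s t0 q0 = 0 \<and>
          pd_t v {T1..T2} s t0 q0 * pd_q w {Q1..Q2} s t0 q0 - pd_q v {Q1..Q2} s t0 q0 * pd_t w {T1..T2} s t0 q0 = 0) \<and>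
         pd_t w {T1..T2} s t0 q0 * pd_q x {Q1..Q2} s t0 q0 - pd_q w {Q1..Q2} s t0 q0 * pd_t x {T1..T2} s t0 q0 \<noteq> 0)) \<and>
    (\<forall>s\<in>{L1..L2}.
         (u s t0 q0 = 0 \<and> v s t0 q0 = 0 \<and> w s t0 q0 = 0 \<and> x s t0 q0 = 0) \<and>
         pd_t w {T1..T2} s t0 q0 * pd_q x {Q1..Q2} s t0 q0 - pd_q w {Q1..Q2} s t0 q0 * pd_t x {T1..T2} s t0 q0 \<noteq> 0
         \<longrightarrow>
         ((pd_t v {T1..T2} s t0 q0 * pd_q x {Q1..Q2} s t0 q0 - pd_q v {Q1..Q2} s t0 q0 * pd_t x {T1..T2} s t0 q0 = 0 \<and>
           pd_t v {T1..T2} s t0 q0 * pd_q w {Q1..Q2} s t0 q0 - pd_q v {Q1..Q2} s t0 q0 * pd_t w {T1..T2} s t0 q0 = 0)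
          \<longleftrightarrow> (pd_t v {T1..T2} s t0 q0 = 0 \<and> pd_q v {Q1..Q2} s t0 q0 = 0)))"
proof -
  let ?I = "{L1..L2}" and ?J = "{T1..T2}" and ?K = "{Q1..Q2}"
  have o: "orthon4 (T s) (N s) (B1 s) (B2 s)" if "s \<in> ?I" for s
    using orthonormal that unfolding orthon4_def by blast
  have Pt: "pd_t P ?J s t0 q0 = pd_t u ?J s t0 q0 *\<^sub>R T s + pd_t v ?J s t0 q0 *\<^sub>R N s
        + pd_t w ?J s t0 q0 *\<^sub>R B1 s + pd_t x ?J s t0 q0 *\<^sub>R B2 s" if s: "s \<in> ?I" for s
  proof -
    have d: "(\<lambda>t'. f s t' q0) differentiable (at t0 within ?J)" if "C1_box f ?I ?J ?K" for f
      using that s t0 q0 unfolding C1_box_def by blast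
    show ?thesis unfolding pd_t_def P_def
      by (rule lin_deriv[OF intervals(2) t0 d[OF C1(1)] d[OF C1(2)] d[OF C1(3)] d[OF C1(4)]])
  qed
  have Pq: "pd_q P ?K s t0 q0 = pd_q u ?K s t0 q0 *\<^sub>R T s + pd_q v ?K s t0 q0 *\<^sub>R N s
        + pd_q w ?K s t0 q0 *\<^sub>R B1 s + pd_q x ?K s t0 q0 *\<^sub>R B2 s" if s: "s \<in> ?I" for s
  proof -
    have d: "(\<lambda>q'. f s t0 q') differentiable (at q0 within ?K)" if "C1_box f ?I ?J ?K" for f
      using that s t0 q0 unfolding C1_box_def by blast
    show ?thesis unfolding pd_q_def P_def
      by (rule lin_deriv[OF intervals(3) q0 d[OF C1(1)] d[OF C1(2)] d[OF C1(3)] d[OF C1(4)]])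
  qed
  have iso: "isoparametric r P ?I t0 q0 \<longleftrightarrow>
     (\<forall>s\<in>?I. u s t0 q0 = 0 \<and> v s t0 q0 = 0 \<and> w s t0 q0 = 0 \<and> x s t0 q0 = 0)"
  proof -
    have "P s t0 q0 = r s \<longleftrightarrow> (u s t0 q0 = 0 \<and> v s t0 q0 = 0 \<and> w s t0 q0 = 0 \<and> x s t0 q0 = 0)"
      if "s \<in> ?I" for s
    proof -
      have "P s t0 q0 = r s \<longleftrightarrow> u s t0 q0 *\<^sub>R T s + v s t0 q0 *\<^sub>R N s + w s t0 q0 *\<^sub>R B1 s + x s t0 q0 *\<^sub>R B2 s = 0"
        unfolding P_def by (simp add: add.assoc)
      thus ?thesis using combo_zero[OF o[OF that]] by simp
    qed
    thus ?thesis unfolding isoparametric_def by auto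
  qed
  have Ps: "pd_s P ?I s t0 q0 = T s" if "isoparametric r P ?I t0 q0" "s \<in> ?I" for s
  proof -
    have "((\<lambda>s'. P s' t0 q0) has_vector_derivative T s) (at s within ?I)"
      by (rule has_vector_derivative_transform[OF \<open>s \<in> ?I\<close> _ frenet_T[rule_format, OF \<open>s \<in> ?I\<close>]])
         (use that(1) in \<open>auto simp: isoparametric_def\<close>)
    thus ?thesis unfolding pd_s_def by (rule vector_derivative_within_closed_interval[OF intervals(1) \<open>s \<in> ?I\<close>])
  qed
  have loc: "(regular_at P ?I ?J ?K s t0 q0 \<and> parallel (N s) (surf_normal P ?I ?J ?K s t0 q0)) \<longleftrightarrow>
     (pd_t v ?J s t0 q0 * pd_q x ?K s t0 q0 - pd_q v ?K s t0 q0 * pd_t x ?J s t0 q0 = 0 \<and>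
      pd_t v ?J s t0 q0 * pd_q w ?K s t0 q0 - pd_q v ?K s t0 q0 * pd_t w ?J s t0 q0 = 0 \<and>
      pd_t w ?J s t0 q0 * pd_q x ?K s t0 q0 - pd_q w ?K s t0 q0 * pd_t x ?J s t0 q0 \<noteq> 0)"
    if "isoparametric r P ?I t0 q0" "s \<in> ?I" for s
    unfolding regular_at_def surf_normal_def Ps[OF that]
    by (rule core[OF o[OF that(2)] Pt[OF that(2)] Pq[OF that(2)]])
  have part1: "isogeodesic r N P ?I ?J ?K t0 q0 \<longleftrightarrow>
      (\<forall>s\<in>?I.
         (u s t0 q0 = 0 \<and> v s t0 q0 = 0 \<and> w s t0 q0 = 0 \<and> x s t0 q0 = 0) \<and>
         (pd_t v ?J s t0 q0 * pd_q x ?K s t0 q0 - pd_q v ?K s t0 q0 * pd_t x ?J s t0 q0 = 0 \<and>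
          pd_t v ?J s t0 q0 * pd_q w ?K s t0 q0 - pd_q v ?K s t0 q0 * pd_t w ?J s t0 q0 = 0) \<and>
         pd_t w ?J s t0 q0 * pd_q x ?K s t0 q0 - pd_q w ?K s t0 q0 * pd_t x ?J s t0 q0 \<noteq> 0)"
    (is "_ \<longleftrightarrow> (\<forall>s\<in>?I. ?R s)")
  proof
    assume g: "isogeodesic r N P ?I ?J ?K t0 q0"
    hence i: "isoparametric r P ?I t0 q0" unfolding isogeodesic_def by simp
    show "\<forall>s\<in>?I. ?R s"
    proof
      fix s assume s: "s \<in> ?I"
      have "regular_at P ?I ?J ?K s t0 q0 \<and> parallel (N s) (surf_normal P ?I ?J ?K s t0 q0)"
        using g s unfolding isogeodesic_def by blast
      thus "(u s t0 q0 = 0 \<and> v s t0 q0 = 0 \<and> w s t0 q0 = 0 \<and> x s t0 q0 = 0) \<and>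
         (pd_t v ?J s t0 q0 * pd_q x ?K s t0 q0 - pd_q v ?K s t0 q0 * pd_t x ?J s t0 q0 = 0 \<and>
          pd_t v ?J s t0 q0 * pd_q w ?K s t0 q0 - pd_q v ?K s t0 q0 * pd_t w ?J s t0 q0 = 0) \<and>
         pd_t w ?J s t0 q0 * pd_q x ?K s t0 q0 - pd_q w ?K s t0 q0 * pd_t x ?J s t0 q0 \<noteq> 0"
        using loc[OF i s] i iso s by blast
    qed
  next
    assume h: "\<forall>s\<in>?I.
         (u s t0 q0 = 0 \<and> v s t0 q0 = 0 \<and> w s t0 q0 = 0 \<and> x s t0 q0 = 0) \<and>
         (pd_t v ?J s t0 q0 * pd_q x ?K s t0 q0 - pd_q v ?K s t0 q0 * pd_t x ?J s t0 q0 = 0 \<and>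
          pd_t v ?J s t0 q0 * pd_q w ?K s t0 q0 - pd_q v ?K s t0 q0 * pd_t w ?J s t0 q0 = 0) \<and>
         pd_t w ?J s t0 q0 * pd_q x ?K s t0 q0 - pd_q w ?K s t0 q0 * pd_t x ?J s t0 q0 \<noteq> 0"
    hence i: "isoparametric r P ?I t0 q0" using iso by blast
    have "regular_at P ?I ?J ?K s t0 q0 \<and> parallel (N s) (surf_normal P ?I ?J ?K s t0 q0)"
      if s: "s \<in> ?I" for s
      using loc[OF i s] h s by blast
    thus "isogeodesic r N P ?I ?J ?K t0 q0" unfolding isogeodesic_def using i by blast
  qed
  show ?thesis using part1 minor_lemma by blast
qed

end
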